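(* Let $W$ be an entanglement witness on $\mathbb{C}^m\otimes\mathbb{C}^n$ and set $W_t:=tW+(1-t)W^*$ for $t\in[0,1]$. (i) For every $t\in[0,1]$, $W_t$ is an entanglement witness if and only if $W_t$ is not positive semidefinite. (ii) For a given $t\in[0,1]$, $W_t$ is an entanglement witness if and only if there is a state $\rho$ such that $W$ detects $\rho_t:=t\rho+(1-t)\rho^*$, i.e. $\mathrm{tr}(W\rho_t)<0$.
   Context: An entanglement witness on $\mathbb{C}^m\otimes\mathbb{C}^n$ is a Hermitian matrix $W$ with $\mathrm{tr}(W\sigma)\ge0$ for all separable states $\sigma$ and $\mathrm{tr}(W\sigma)<0$ for at least one entangled state; $W$ detects $\rho$ if $\mathrm{tr}(W\rho)<0$. $M^*$ denotes the entrywise complex conjugate. *)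

theory Defs
  imports "HOL-Analysis.Analysis"
begin

text \<open>Matrices on C^m (x) C^n are complex matrices indexed by the finite type 'm \<times> 'n.\<close>

definition conj_mat :: "complex^'n^'k \<Rightarrow> complex^'n^'k" where
  "conj_mat M = (\<chi> i j. cnj (M $ i $ j))"

definition adjoint_mat :: "complex^'n^'n \<Rightarrow> complex^'n^'n" where
  "adjoint_mat M = (\<chi> i j. cnj (M $ j $ i))"

definition hermitian :: "complex^'n^'n \<Rightarrow> bool" where
  "hermitian M \<longleftrightarrow> adjoint_mat M = M"

definition quad_form :: "complex^'n^'n \<Rightarrow> complex^'n \<Rightarrow> complex" where
  "quad_form M v = (\<Sum>i\<in>UNIV. \<Sum>j\<in>UNIV. cnj (v $ i) * M $ i $ j * v $ j)"

definition psd :: "complex^'n^'n \<Rightarrow> bool" where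
  "psd M \<longleftrightarrow> hermitian M \<and> (\<forall>v. Im (quad_form M v) = 0 \<and> Re (quad_form M v) \<ge> 0)"

definition is_state :: "complex^'n^'n \<Rightarrow> bool" where
  "is_state \<rho> \<longleftrightarrow> psd \<rho> \<and> trace \<rho> = 1"

definition kron :: "complex^'m^'m \<Rightarrow> complex^'n^'n \<Rightarrow> complex^('m \<times> 'n)^('m \<times> 'n)" where
  "kron A B = (\<chi> p q. A $ fst p $ fst q * B $ snd p $ snd q)"

definition separable :: "complex^('m::finite \<times> 'n::finite)^('m \<times> 'n) \<Rightarrow> bool" where
  "separable \<sigma> \<longleftrightarrow> (\<exists>(k::nat) (p::nat \<Rightarrow> real) (A::nat \<Rightarrow> complex^'m^'m) (B::nat \<Rightarrow> complex^'n^'n).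
      (\<forall>i<k. p i \<ge> 0 \<and> is_state (A i) \<and> is_state (B i)) \<and> (\<Sum>i<k. p i) = 1 \<and>
      \<sigma> = (\<Sum>i<k. p i *\<^sub>R kron (A i) (B i)))"

definition entangled :: "complex^('m::finite \<times> 'n::finite)^('m \<times> 'n) \<Rightarrow> bool" where
  "entangled \<rho> \<longleftrightarrow> is_state \<rho> \<and> \<not> separable \<rho>"

text \<open>tr(W rho) is real for Hermitian W, rho; the conditions below state realness and sign explicitly.\<close>

definition detects :: "complex^'n^'n \<Rightarrow> complex^'n^'n \<Rightarrow> bool" where
  "detects W \<rho> \<longleftrightarrow> Im (trace (W ** \<rho>)) = 0 \<and> Re (trace (W ** \<rho>)) < 0"

definition entanglement_witness :: "complex^('m::finite \<times> 'n::finite)^('m \<times> 'n) \<Rightarrow> bool" where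
  "entanglement_witness W \<longleftrightarrow> hermitian W \<and>
     (\<forall>\<sigma>. separable \<sigma> \<longrightarrow> Im (trace (W ** \<sigma>)) = 0 \<and> Re (trace (W ** \<sigma>)) \<ge> 0) \<and>
     (\<exists>\<rho>. entangled \<rho> \<and> detects W \<rho>)"

definition mix :: "real \<Rightarrow> complex^'n^'n \<Rightarrow> complex^'n^'n" where
  "mix t M = t *\<^sub>R M + (1 - t) *\<^sub>R conj_mat M"

end

theory Submission
  imports Defs
begin

lemma herm_entry: "hermitian M \<Longrightarrow> cnj (M$j$i) = M$i$j"
  unfolding hermitian_def adjoint_mat_def by (metis vec_lambda_beta)

lemma hermI: "(\<And>i j. cnj (M$j$i) = M$i$j) \<Longrightarrow> hermitian M"
  unfolding hermitian_def adjoint_mat_def by (simp add: vec_eq_iff)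

definition tr2 :: "complex^'n^'n \<Rightarrow> complex^'n^'n \<Rightarrow> complex" where
  "tr2 A B = (\<Sum>i\<in>UNIV. \<Sum>j\<in>UNIV. A$i$j * B$j$i)"

lemma trace_tr2: "trace (A ** B) = tr2 A B"
  unfolding trace_def tr2_def matrix_matrix_mult_def by simp

definition bf :: "complex^'n^'n \<Rightarrow> complex^'n \<Rightarrow> complex^'n \<Rightarrow> complex" where
  "bf M v w = (\<Sum>i\<in>UNIV. \<Sum>j\<in>UNIV. cnj (v $ i) * M $ i $ j * w $ j)"

lemma qf_bf: "quad_form M v = bf M v v"
  unfolding quad_form_def bf_def ..

lemma bf_add: "bf M (v + w) (v + w) = bf M v v + bf M v w + bf M w v + bf M w w"
  unfolding bf_def by (simp add: algebra_simps sum.distrib)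

lemma ifz1: "(if P then (a::complex) else 0) * b = (if P then a * b else 0)" by simp
lemma ifz2: "b * (if P then (a::complex) else 0) = (if P then b * a else 0)" by simp
lemma ifz3: "cnj (if P then (a::complex) else 0) = (if P then cnj a else 0)" by simp

lemma ifz4: "(\<Sum>j\<in>A. if P then f j else (0::complex)) = (if P then (\<Sum>j\<in>A. f j) else 0)" by simp

lemma bf_axis_l: "bf M (axis k s) w = cnj s * (\<Sum>j\<in>UNIV. M$k$j * w$j)"
  unfolding bf_def axis_def by (simp add: sum_distrib_left ifz1 ifz2 ifz3 ifz4 mult.assoc)

lemma bf_axis_r: "bf M v (axis k s) = s * (\<Sum>i\<in>UNIV. cnj (v$i) * M$i$k)"
  unfolding bf_def axis_def by (simp add: sum_distrib_left ifz1 ifz2 ifz3 ifz4 mult.commute mult.left_commute)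

lemma bf_axis_lr: "bf M (axis k s) (axis k s) = cnj s * s * M$k$k"
  unfolding bf_axis_l by (simp add: axis_def ifz1 ifz2)


lemma bf_herm_swap:
  assumes "hermitian M"
  shows "bf M w v = cnj (bf M v w)"
proof -
  have "cnj (bf M v w) = (\<Sum>i\<in>UNIV. \<Sum>j\<in>UNIV. v$i * M$j$i * cnj (w$j))"
    unfolding bf_def using herm_entry[OF assms] by simp
  also have "\<dots> = (\<Sum>j\<in>UNIV. \<Sum>i\<in>UNIV. v$i * M$j$i * cnj (w$j))"
    by (rule sum.swap)
  also have "\<dots> = bf M w v" unfolding bf_def by (simp add: mult.commute mult.left_commute)
  finally show ?thesis by simp
qed

lemma cnj_eq_Im0: "cnj z = z \<Longrightarrow> Im z = 0"
  by (metis Reals_cnj_iff complex_is_Real_iff)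

lemma qf_real: "hermitian M \<Longrightarrow> Im (quad_form M v) = 0"
  unfolding qf_bf by (rule cnj_eq_Im0) (metis bf_herm_swap)

lemma sum_herm: "hermitian M \<Longrightarrow> (\<Sum>i\<in>UNIV. cnj (v$i) * M$i$k) = cnj (\<Sum>i\<in>UNIV. M$k$i * v$i)"
  using herm_entry[of M] by (simp add: mult.commute)

lemma diag_real: "hermitian M \<Longrightarrow> M$k$k = complex_of_real (Re (M$k$k))"
  using herm_entry[of M k k] by (metis cnj_eq_Im0 complex_eq Im_complex_of_real Re_complex_of_real complex_eqI)

lemma psd_diag: "psd M \<Longrightarrow> Re (M$k$k) \<ge> 0"
proof -
  assume "psd M"
  then have "Re (quad_form M (axis k 1)) \<ge> 0" unfolding psd_def by blast
  then show ?thesis unfolding qf_bf bf_axis_lr by simp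
qed

lemma schur:
  assumes "psd B"
  shows "(cmod (\<Sum>j\<in>UNIV. B$k$j * v$j))^2 \<le> Re (quad_form B v) * Re (B$k$k)"
proof -
  define y where "y = (\<Sum>j\<in>UNIV. B$k$j * v$j)"
  define Q where "Q = Re (quad_form B v)"
  define c where "c = Re (B$k$k)"
  define Y where "Y = (cmod y)^2"
  have herm: "hermitian B" using assms unfolding psd_def by blast
  have Bkk: "B$k$k = complex_of_real c" unfolding c_def by (rule diag_real[OF herm])
  have c0: "c \<ge> 0" unfolding c_def by (rule psd_diag[OF assms])
  have Y0: "Y \<ge> 0" unfolding Y_def by simp
  have yy: "y * cnj y = complex_of_real Y" unfolding Y_def by (rule complex_norm_square[symmetric])
  have key: "Q - 2 * r * Y + r^2 * Y * c \<ge> 0" for r :: real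
  proof -
    define s where "s = - complex_of_real r * y"
    have "Re (quad_form B (v + axis k s)) \<ge> 0" using assms unfolding psd_def by blast
    moreover have "quad_form B (v + axis k s) = quad_form B v + s * cnj y + cnj s * y + cnj s * s * B$k$k"
      unfolding qf_bf bf_add bf_axis_lr unfolding bf_axis_l bf_axis_r sum_herm[OF herm] y_def by simp
    moreover have "s * cnj y = - complex_of_real (r * Y)" unfolding s_def using yy by (simp add: mult.assoc)
    moreover have "cnj s * y = - complex_of_real (r * Y)" unfolding s_def using yy by (simp add: mult.commute mult.left_commute)
    moreover have "cnj s * s * B$k$k = complex_of_real (r^2 * Y * c)" unfolding s_def Bkk
      using yy by (simp add: power2_eq_square mult.commute mult.left_commute)
    ultimately have "Re (quad_form B v + - complex_of_real (r * Y) + - complex_of_real (r * Y) + complex_of_real (r^2 * Y * c)) \<ge> 0"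
      by simp
    then show ?thesis unfolding Q_def by (simp add: mult.commute mult.left_commute)
  qed
  have "Y \<le> Q * c"
  proof (cases "c > 0")
    case True
    have "Q - 2 * (1/c) * Y + (1/c)^2 * Y * c \<ge> 0" by (rule key)
    then have "Q - Y / c \<ge> 0" using True by (simp add: power2_eq_square field_simps)
    then show ?thesis using True by (simp add: field_simps)
  next
    case False
    then have "c = 0" using c0 by simp
    show ?thesis
    proof (rule ccontr)
      assume "\<not> Y \<le> Q * c"
      then have "Y > 0" using \<open>c = 0\<close> by simp
      have "Q - 2 * ((Q + 1) / (2 * Y)) * Y + ((Q + 1) / (2 * Y))^2 * Y * c \<ge> 0" by (rule key)
      then show False using \<open>Y > 0\<close> \<open>c = 0\<close> by (simp add: field_simps)
    qed
  qed
  then show ?thesis unfolding Y_def y_def Q_def c_def .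
qed


lemma zero_diag:
  assumes "psd B" "B$k$k = 0"
  shows "B$k$j = 0"
proof -
  have "(cmod (\<Sum>i\<in>UNIV. B$k$i * axis j 1 $ i))^2 \<le> Re (quad_form B (axis j 1)) * Re (B$k$k)"
    by (rule schur[OF assms(1)])
  moreover have "(\<Sum>i\<in>UNIV. B$k$i * axis j 1 $ i) = B$k$j"
    by (simp add: axis_def ifz2)
  ultimately show ?thesis using assms(2) by simp
qed

lemma tr2_diff: "tr2 A (B - R) = tr2 A B - tr2 A R"
  unfolding tr2_def by (simp add: algebra_simps sum_subtractf)

lemma qf_diff: "quad_form (B - R) v = quad_form B v - quad_form R v"
  unfolding quad_form_def by (simp add: algebra_simps sum_subtractf)

lemma psd_tr2_aux:
  fixes A B :: "complex^'n::finite^'n"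
  assumes "psd A"
  shows "psd B \<Longrightarrow> card {j. B$j$j \<noteq> 0} = n \<Longrightarrow> Re (tr2 A B) \<ge> 0"
proof (induction n arbitrary: B rule: less_induct)
  case (less n)
  have hermA: "hermitian A" using assms unfolding psd_def by blast
  have herm: "hermitian B" using less.prems unfolding psd_def by blast
  show ?case
  proof (cases "\<forall>j. B$j$j = 0")
    case True
    then have "B$i$j = 0" for i j using zero_diag[OF less.prems(1)] by blast
    then show ?thesis unfolding tr2_def by simp
  next
    case False
    then obtain k where k: "B$k$k \<noteq> 0" by blast
    define c where "c = Re (B$k$k)"
    have Bkk: "B$k$k = complex_of_real c" unfolding c_def by (rule diag_real[OF herm])
    have "c \<noteq> 0" using k Bkk by auto
    moreover have "c \<ge> 0" using psd_diag[OF less.prems(1), of k] unfolding c_def .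
    ultimately have c0: "c > 0" by simp
    define u where "u = (\<chi> j. B$j$k)"
    define R where "R = (\<chi> i j. u$i * cnj (u$j) / complex_of_real c)"
    have hermR: "hermitian R" by (rule hermI) (simp add: R_def)
    have qfR: "quad_form R v = complex_of_real ((cmod (\<Sum>j\<in>UNIV. B$k$j * v$j))^2 / c)" for v
    proof -
      define y where "y = (\<Sum>j\<in>UNIV. B$k$j * v$j)"
      have "quad_form R v = (\<Sum>i\<in>UNIV. cnj (v$i) * u$i) * (\<Sum>j\<in>UNIV. cnj (u$j) * v$j) / complex_of_real c"
        unfolding quad_form_def R_def sum_product sum_divide_distrib
        by (simp add: mult.commute mult.left_commute)
      also have "(\<Sum>j\<in>UNIV. cnj (u$j) * v$j) = y"
        unfolding u_def y_def using herm_entry[OF herm] by simp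
      also have "(\<Sum>i\<in>UNIV. cnj (v$i) * u$i) = cnj y"
        unfolding u_def y_def using sum_herm[OF herm] by simp
      also have "cnj y * y = complex_of_real ((cmod y)^2)"
        using complex_norm_square[of y] by (simp add: mult.commute)
      finally show ?thesis unfolding y_def by simp
    qed
    define B' where "B' = B - R"
    have psdB': "psd B'"
      unfolding psd_def
    proof
      show "hermitian B'" unfolding B'_def
        by (rule hermI) (simp add: herm_entry[OF herm] herm_entry[OF hermR])
      show "\<forall>v. Im (quad_form B' v) = 0 \<and> 0 \<le> Re (quad_form B' v)"
      proof
        fix v
        have s: "(cmod (\<Sum>j\<in>UNIV. B$k$j * v$j))^2 \<le> Re (quad_form B v) * c"
          using schur[OF less.prems(1)] unfolding c_def by blast
        have "(cmod (\<Sum>j\<in>UNIV. B$k$j * v$j))^2 / c \<le> Re (quad_form B v)"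
          using s c0 by (simp add: divide_le_eq)
        then show "Im (quad_form B' v) = 0 \<and> 0 \<le> Re (quad_form B' v)"
          unfolding B'_def qf_diff qfR using qf_real[OF herm] by simp
      qed
    qed
    have B'kk: "B'$k$k = 0"
      unfolding B'_def R_def u_def using Bkk c0
      by (simp add: complex_norm_square[symmetric] power2_eq_square)
    have sub: "{j. B'$j$j \<noteq> 0} \<subset> {j. B$j$j \<noteq> 0}"
    proof
      show "{j. B'$j$j \<noteq> 0} \<subseteq> {j. B$j$j \<noteq> 0}"
      proof
        fix j assume "j \<in> {j. B'$j$j \<noteq> 0}"
        then have "B'$j$j \<noteq> 0" by simp
        show "j \<in> {j. B$j$j \<noteq> 0}"
        proof (rule ccontr)
          assume "j \<notin> {j. B$j$j \<noteq> 0}"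
          then have "B$j$j = 0" by simp
          then have "B$j$k = 0" by (rule zero_diag[OF less.prems(1)])
          then have "B'$j$j = 0" using \<open>B$j$j = 0\<close> unfolding B'_def R_def u_def by simp
          with \<open>B'$j$j \<noteq> 0\<close> show False by simp
        qed
      qed
      show "{j. B'$j$j \<noteq> 0} \<noteq> {j. B$j$j \<noteq> 0}" using k B'kk by blast
    qed
    then have lt: "card {j. B'$j$j \<noteq> 0} < n" using less.prems(2)
      using psubset_card_mono[OF finite sub] by simp
    have IH: "Re (tr2 A B') \<ge> 0" by (rule less.IH[OF lt psdB' refl])
    have trR: "tr2 A R = quad_form A u / complex_of_real c"
      unfolding tr2_def quad_form_def R_def sum_divide_distrib
      by (simp add: mult.commute mult.left_commute)
    have trR0: "Re (tr2 A R) \<ge> 0"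
      unfolding trR using assms c0 unfolding psd_def by (simp add: Re_divide_of_real)
    have "tr2 A B = tr2 A R + tr2 A B'" unfolding B'_def tr2_diff by simp
    then show ?thesis using IH trR0 by simp
  qed
qed

lemma psd_tr2: "psd A \<Longrightarrow> psd B \<Longrightarrow> Re (tr2 A B) \<ge> 0"
  using psd_tr2_aux by blast


lemma conj_entry [simp]: "conj_mat M $ i $ j = cnj (M $ i $ j)"
  unfolding conj_mat_def by simp

lemma tr2_herm_real:
  assumes "hermitian A" "hermitian B"
  shows "Im (tr2 A B) = 0"
proof (rule cnj_eq_Im0)
  have "cnj (tr2 A B) = (\<Sum>i\<in>UNIV. \<Sum>j\<in>UNIV. A$j$i * B$i$j)"
    unfolding tr2_def using herm_entry[OF assms(1)] herm_entry[OF assms(2)] by simp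
  also have "\<dots> = (\<Sum>j\<in>UNIV. \<Sum>i\<in>UNIV. A$j$i * B$i$j)" by (rule sum.swap)
  also have "\<dots> = tr2 A B" unfolding tr2_def ..
  finally show "cnj (tr2 A B) = tr2 A B" .
qed

lemma herm_conj: "hermitian M \<Longrightarrow> hermitian (conj_mat M)"
  by (rule hermI) (simp add: herm_entry)

lemma tr2_conj: "tr2 (conj_mat W) S = cnj (tr2 W (conj_mat S))"
  unfolding tr2_def by simp

lemma qf_conj: "quad_form (conj_mat M) v = cnj (quad_form M (\<chi> i. cnj (v$i)))"
  unfolding quad_form_def by simp

lemma trace_conj: "trace (conj_mat M) = cnj (trace M)"
  unfolding trace_def by simp

lemma psd_conj: "psd M \<Longrightarrow> psd (conj_mat M)"
  unfolding psd_def qf_conj by (auto simp: herm_conj)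

lemma state_conj: "is_state M \<Longrightarrow> is_state (conj_mat M)"
  unfolding is_state_def using psd_conj trace_conj by (metis complex_cnj_one)

lemma kron_conj: "conj_mat (kron A B) = kron (conj_mat A) (conj_mat B)"
  unfolding kron_def by (simp add: vec_eq_iff)

lemma cscale [simp]: "(r *\<^sub>R (M::complex^'a^'b)) $ i $ j = complex_of_real r * M$i$j"
  unfolding vector_scaleR_component by (simp add: scaleR_conv_of_real)

lemma conj_sum: "conj_mat (\<Sum>i<k. p i *\<^sub>R X i) = (\<Sum>i<k. p i *\<^sub>R conj_mat (X i))"
  unfolding vec_eq_iff conj_entry sum_component cscale cnj_sum complex_cnj_mult complex_cnj_complex_of_real
  by blast

lemma sep_conj:
  fixes \<sigma> :: "complex^('a::finite \<times> 'b::finite)^('a \<times> 'b)"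
  assumes "separable \<sigma>"
  shows "separable (conj_mat \<sigma>)"
proof -
  obtain k :: nat and p :: "nat \<Rightarrow> real" and A :: "nat \<Rightarrow> complex^'a^'a" and B :: "nat \<Rightarrow> complex^'b^'b"
    where h: "\<forall>i<k. 0 \<le> p i \<and> is_state (A i) \<and> is_state (B i)"
    "sum p {..<k} = 1" "\<sigma> = (\<Sum>i<k. p i *\<^sub>R kron (A i) (B i))"
    using assms unfolding separable_def by (elim exE conjE) (rule that; assumption)
  have e: "conj_mat \<sigma> = (\<Sum>i<k. p i *\<^sub>R kron (conj_mat (A i)) (conj_mat (B i)))"
    unfolding h(3) conj_sum kron_conj ..
  have s: "\<forall>i<k. 0 \<le> p i \<and> is_state (conj_mat (A i)) \<and> is_state (conj_mat (B i))"
    using h(1) by (simp add: state_conj)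
  show ?thesis unfolding separable_def
    apply (rule exI[of _ k])
    apply (rule exI[of _ p])
    apply (rule exI[of _ "\<lambda>i. conj_mat (A i)"])
    apply (rule exI[of _ "\<lambda>i. conj_mat (B i)"])
    apply (rule conjI[OF s conjI[OF h(2) e]])
    done
qed

lemma herm_kron: "hermitian A \<Longrightarrow> hermitian B \<Longrightarrow> hermitian (kron A B)"
  by (rule hermI) (simp add: kron_def herm_entry)

lemma herm_sum: "(\<And>i. i < (k::nat) \<Longrightarrow> hermitian (X i)) \<Longrightarrow> hermitian (\<Sum>i<k. p i *\<^sub>R X i)"
  by (rule hermI) (simp add: herm_entry del: vector_scaleR_component)

lemma sep_herm:
  fixes \<sigma> :: "complex^('a::finite \<times> 'b::finite)^('a \<times> 'b)"
  assumes "separable \<sigma>"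
  shows "hermitian \<sigma>"
proof -
  obtain k :: nat and p :: "nat \<Rightarrow> real" and A :: "nat \<Rightarrow> complex^'a^'a" and B :: "nat \<Rightarrow> complex^'b^'b"
    where h: "\<forall>i<k. 0 \<le> p i \<and> is_state (A i) \<and> is_state (B i)"
    "sum p {..<k} = 1" "\<sigma> = (\<Sum>i<k. p i *\<^sub>R kron (A i) (B i))"
    using assms unfolding separable_def by (elim exE conjE) (rule that; assumption)
  show ?thesis unfolding h(3)
    by (rule herm_sum, rule herm_kron) (use h(1) in \<open>auto simp: is_state_def psd_def\<close>)
qed

lemma mix_entry [simp]: "mix t M $ i $ j = complex_of_real t * M$i$j + complex_of_real (1 - t) * cnj (M$i$j)"
  unfolding mix_def vector_add_component vector_scaleR_component conj_entry by (simp add: scaleR_conv_of_real)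

lemma herm_mix: "hermitian M \<Longrightarrow> hermitian (mix t M)"
  by (rule hermI) (simp add: herm_entry)

lemma lin2: "(\<Sum>i\<in>UNIV. \<Sum>j\<in>UNIV. (a * X i j + b * Y i j) * (Z j i::complex)) =
   a * (\<Sum>i\<in>UNIV. \<Sum>j\<in>UNIV. X i j * Z j i) + b * (\<Sum>i\<in>UNIV. \<Sum>j\<in>UNIV. Y i j * Z j i)"
  by (simp add: sum.distrib sum_distrib_left algebra_simps)

lemma lin2': "(\<Sum>i\<in>UNIV. \<Sum>j\<in>UNIV. (Z i j::complex) * (a * X j i + b * Y j i)) =
   a * (\<Sum>i\<in>UNIV. \<Sum>j\<in>UNIV. Z i j * X j i) + b * (\<Sum>i\<in>UNIV. \<Sum>j\<in>UNIV. Z i j * Y j i)"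
  by (simp add: sum.distrib sum_distrib_left algebra_simps)

lemma tr2_mix_l: "tr2 (mix t W) S = complex_of_real t * tr2 W S + complex_of_real (1 - t) * tr2 (conj_mat W) S"
  unfolding tr2_def mix_entry lin2 conj_entry ..

lemma tr2_mix_r: "tr2 W (mix t S) = complex_of_real t * tr2 W S + complex_of_real (1 - t) * tr2 W (conj_mat S)"
  unfolding tr2_def mix_entry lin2' conj_entry ..

lemma real_cnj: "Im z = 0 \<Longrightarrow> cnj z = z"
  by (simp add: complex_eq_iff)

lemma tr2_mix_swap:
  assumes "hermitian W" "hermitian S"
  shows "tr2 W (mix t S) = tr2 (mix t W) S"
proof -
  have "Im (tr2 W (conj_mat S)) = 0" by (rule tr2_herm_real[OF assms(1) herm_conj[OF assms(2)]])
  then have "tr2 (conj_mat W) S = tr2 W (conj_mat S)" unfolding tr2_conj by (rule real_cnj)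
  then show ?thesis unfolding tr2_mix_l tr2_mix_r by simp
qed

lemma mix_sep:
  assumes "entanglement_witness W" "t \<in> {0..1}" "separable \<sigma>"
  shows "Im (tr2 (mix t W) \<sigma>) = 0 \<and> Re (tr2 (mix t W) \<sigma>) \<ge> 0"
proof
  have hW: "hermitian W" using assms(1) unfolding entanglement_witness_def by blast
  show "Im (tr2 (mix t W) \<sigma>) = 0"
    by (rule tr2_herm_real[OF herm_mix[OF hW] sep_herm[OF assms(3)]])
  have a: "Re (tr2 W \<sigma>) \<ge> 0" using assms(1,3) unfolding entanglement_witness_def trace_tr2 by blast
  have b: "Re (tr2 W (conj_mat \<sigma>)) \<ge> 0" using assms(1) sep_conj[OF assms(3)]
    unfolding entanglement_witness_def trace_tr2 by blast
  have "Re (tr2 (mix t W) \<sigma>) = t * Re (tr2 W \<sigma>) + (1 - t) * Re (tr2 W (conj_mat \<sigma>))"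
    unfolding tr2_mix_l tr2_conj by simp
  also have "\<dots> \<ge> 0" using a b assms(2) by simp
  finally show "Re (tr2 (mix t W) \<sigma>) \<ge> 0" .
qed

lemma not_psd_state:
  fixes M :: "complex^'n::finite^'n"
  assumes "hermitian M" "\<not> psd M"
  shows "\<exists>\<rho>. is_state \<rho> \<and> Im (tr2 M \<rho>) = 0 \<and> Re (tr2 M \<rho>) < 0"
proof -
  have "\<exists>v. Re (quad_form M v) < 0"
    using assms qf_real[OF assms(1)] unfolding psd_def by (meson not_le)
  then obtain v where v: "Re (quad_form M v) < 0" by blast
  define N where "N = (\<Sum>i\<in>UNIV. (cmod (v$i))^2)"
  have "v \<noteq> 0" using v by (auto simp: quad_form_def)
  then obtain i0 where "v$i0 \<noteq> 0" by (auto simp: vec_eq_iff)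
  have "N \<ge> (cmod (v$i0))^2" unfolding N_def
    by (rule member_le_sum) auto
  moreover have "(cmod (v$i0))^2 > 0" using \<open>v$i0 \<noteq> 0\<close> by simp
  ultimately have N0: "N > 0" by linarith
  define \<rho> where "\<rho> = (\<chi> i j. v$i * cnj (v$j) / complex_of_real N)"
  have herm: "hermitian \<rho>" by (rule hermI) (simp add: \<rho>_def)
  have qf: "quad_form \<rho> u = complex_of_real ((cmod (\<Sum>i\<in>UNIV. cnj (u$i) * v$i))^2 / N)" for u
  proof -
    define z where "z = (\<Sum>i\<in>UNIV. cnj (u$i) * v$i)"
    have "quad_form \<rho> u = (\<Sum>i\<in>UNIV. cnj (u$i) * v$i) * (\<Sum>j\<in>UNIV. cnj (v$j) * u$j) / complex_of_real N"
      unfolding quad_form_def \<rho>_def sum_product sum_divide_distrib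
      by (simp add: mult.commute mult.left_commute)
    also have "(\<Sum>j\<in>UNIV. cnj (v$j) * u$j) = cnj z" unfolding z_def by (simp add: mult.commute)
    also have "(\<Sum>i\<in>UNIV. cnj (u$i) * v$i) * cnj z = complex_of_real ((cmod z)^2)"
      using complex_norm_square[of z] unfolding z_def by simp
    finally show ?thesis unfolding z_def by simp
  qed
  have tr: "trace \<rho> = 1"
  proof -
    have "trace \<rho> = (\<Sum>i\<in>UNIV. v$i * cnj (v$i)) / complex_of_real N"
      unfolding trace_def \<rho>_def sum_divide_distrib by simp
    also have "(\<Sum>i\<in>UNIV. v$i * cnj (v$i)) = complex_of_real N"
      unfolding N_def of_real_sum complex_norm_square ..
    finally show ?thesis using N0 by simp
  qed
  have st: "is_state \<rho>" unfolding is_state_def psd_def using herm tr N0 by (simp add: qf)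
  have trM: "tr2 M \<rho> = quad_form M v / complex_of_real N"
    unfolding tr2_def quad_form_def \<rho>_def sum_divide_distrib
    by (simp add: mult.commute mult.left_commute)
  have "Im (tr2 M \<rho>) = 0" by (rule tr2_herm_real[OF assms(1) herm])
  moreover have "Re (tr2 M \<rho>) < 0" unfolding trM using v N0
    by (simp add: Re_divide_of_real divide_neg_pos)
  ultimately show ?thesis using st by blast
qed

theorem lemma4:
  fixes W :: "complex^('m::finite \<times> 'n::finite)^('m \<times> 'n)"
  assumes "entanglement_witness W"
  shows "(\<forall>t\<in>{0..1}. entanglement_witness (mix t W) \<longleftrightarrow> \<not> psd (mix t W))
       \<and> (\<forall>t\<in>{0..1}. entanglement_witness (mix t W) \<longleftrightarrow>
            (\<exists>\<rho>::complex^('m \<times> 'n)^('m \<times> 'n). is_state \<rho> \<and> detects W (mix t \<rho>)))"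
proof -
  have hW: "hermitian W" using assms unfolding entanglement_witness_def by blast
  have A: "entanglement_witness (mix t W) \<longleftrightarrow> \<not> psd (mix t W)" if t: "t \<in> {0..1}" for t
  proof
    assume "entanglement_witness (mix t W)"
    then obtain \<rho> where "entangled \<rho>" "detects (mix t W) \<rho>"
      unfolding entanglement_witness_def by blast
    then have "psd \<rho>" "Re (tr2 (mix t W) \<rho>) < 0"
      unfolding entangled_def is_state_def detects_def trace_tr2 by auto
    then show "\<not> psd (mix t W)" using psd_tr2 by force
  next
    assume np: "\<not> psd (mix t W)"
    obtain \<rho> where r: "is_state \<rho>" "Im (tr2 (mix t W) \<rho>) = 0" "Re (tr2 (mix t W) \<rho>) < 0"
      using not_psd_state[OF herm_mix[OF hW] np] by blast
    have "\<not> separable \<rho>" using mix_sep[OF assms t] r(3) by force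
    then have "entangled \<rho> \<and> detects (mix t W) \<rho>"
      using r unfolding entangled_def detects_def trace_tr2 by simp
    then show "entanglement_witness (mix t W)"
      unfolding entanglement_witness_def trace_tr2 using herm_mix[OF hW] mix_sep[OF assms t] by blast
  qed
  have B: "(\<exists>\<rho>::complex^('m \<times> 'n)^('m \<times> 'n). is_state \<rho> \<and> detects W (mix t \<rho>)) \<longleftrightarrow> \<not> psd (mix t W)"
    for t
  proof
    assume "\<exists>\<rho>::complex^('m \<times> 'n)^('m \<times> 'n). is_state \<rho> \<and> detects W (mix t \<rho>)"
    then obtain \<rho> :: "complex^('m \<times> 'n)^('m \<times> 'n)" where r: "is_state \<rho>" "detects W (mix t \<rho>)" by blast
    have hr: "hermitian \<rho>" "psd \<rho>" using r(1) unfolding is_state_def psd_def by auto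
    have "Re (tr2 (mix t W) \<rho>) < 0"
      using r(2) unfolding detects_def trace_tr2 tr2_mix_swap[OF hW hr(1)] by blast
    then show "\<not> psd (mix t W)" using psd_tr2 hr(2) by force
  next
    assume np: "\<not> psd (mix t W)"
    obtain \<rho> where r: "is_state \<rho>" "Im (tr2 (mix t W) \<rho>) = 0" "Re (tr2 (mix t W) \<rho>) < 0"
      using not_psd_state[OF herm_mix[OF hW] np] by blast
    have hr: "hermitian \<rho>" using r(1) unfolding is_state_def psd_def by auto
    have "detects W (mix t \<rho>)"
      unfolding detects_def trace_tr2 tr2_mix_swap[OF hW hr] using r by simp
    then show "\<exists>\<rho>::complex^('m \<times> 'n)^('m \<times> 'n). is_state \<rho> \<and> detects W (mix t \<rho>)"
      using r(1) by blast
  qed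
  show ?thesis using A B by blast
qed

end
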